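(* Let $(\pi,T,\eta,\mu)$ be a $T$-invariant random system which is time reversible with time-reversing map $\tilde J$, and let $J$ be the induced unitary composition operator $Jf=f\circ J$ on $L^2(X,\mu)$. Then, as operators on $L^2(X,\mu)$, $P_{\eta,T}^*=J^*P_{\eta,T}J$.
   Context: A measured fibration is a measurable map $\pi:\mathcal M\to X$ between Borel spaces together with a family $\eta=\{\eta_x\}_{x\in X}$ of probability measures on $\mathcal M$ with $\eta_x(\pi^{-1}(x))=1$ for every $x$, measurable in the sense that $x\mapsto\eta_x(f)=\int f\,d\eta_x$ is Borel for every Borel $f:\mathcal M\to[0,\infty]$. A random system $(\pi,T,\eta,\mu)$ consists of such a measured fibration, a measurable map $T:\mathcal M\to\mathcal M$, and a probability measure $\mu$ on $X$; $\mu\circ\eta$ is the probability measure on $\mathcal M$ with $(\mu\circ\eta)(f)=\int_X\eta_x(f)\,d\mu(x)$. The Markov operator is $(P_{\eta,T}f)(x)=\int_{\pi^{-1}(x)}f(\pi(T(\xi)))\,d\eta_x(\xi)$. The random system is $T$-invariant if $T$ is a measurable isomorphism and $\nu:=\mu\circ\eta$ satisfies $T_*\nu=\nu$. It is time reversible if there is a measurable isomorphism $\tilde J:\mathcal M\to\mathcal M$ mapping fibers of $\pi$ to fibers, with $\tilde J_*\nu=\nu$ and $T\circ\tilde J=\tilde J\circ T^{-1}$; then $\tilde J$ induces a $\mu$-preserving measurable isomorphism $J:X\to X$ with $J\circ\pi=\pi\circ\tilde J$, and $\tilde J$ is called the time-reversing map. *)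

theory Defs
  imports "HOL-Probability.Probability"
begin

text \<open>Borel spaces are modelled as measurable spaces in which all points are measurable.\<close>
definition points_measurable :: "'a measure \<Rightarrow> bool" where
  "points_measurable M \<longleftrightarrow> (\<forall>x\<in>space M. {x} \<in> sets M)"

definition meas_iso :: "'a measure \<Rightarrow> 'b measure \<Rightarrow> ('a \<Rightarrow> 'b) \<Rightarrow> bool" where
  "meas_iso M N f \<longleftrightarrow> bij_betw f (space M) (space N) \<and> f \<in> measurable M N
     \<and> the_inv_into (space M) f \<in> measurable N M"

definition measured_fibration ::
    "'m measure \<Rightarrow> 'x measure \<Rightarrow> ('m \<Rightarrow> 'x) \<Rightarrow> ('x \<Rightarrow> 'm measure) \<Rightarrow> bool" where
  "measured_fibration M X \<pi> \<eta> \<longleftrightarrow>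
     points_measurable M \<and> points_measurable X \<and>
     \<pi> \<in> measurable M X \<and>
     (\<forall>x\<in>space X. prob_space (\<eta> x) \<and> sets (\<eta> x) = sets M \<and>
         emeasure (\<eta> x) (\<pi> -` {x} \<inter> space M) = 1) \<and>
     (\<forall>f \<in> borel_measurable M. (\<lambda>x. \<integral>\<^sup>+ \<xi>. f \<xi> \<partial>\<eta> x) \<in> borel_measurable X)"

definition comp_kernel :: "'x measure \<Rightarrow> ('x \<Rightarrow> 'm measure) \<Rightarrow> 'm measure" where
  "comp_kernel \<mu> \<eta> = bind \<mu> \<eta>"

definition markov_op ::
    "('m \<Rightarrow> 'x) \<Rightarrow> ('m \<Rightarrow> 'm) \<Rightarrow> ('x \<Rightarrow> 'm measure) \<Rightarrow> ('x \<Rightarrow> real) \<Rightarrow> 'x \<Rightarrow> real" where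
  "markov_op \<pi> T \<eta> f x = (\<integral>\<xi>. f (\<pi> (T \<xi>)) \<partial>\<eta> x)"

text \<open>Random system (pi,T,eta,mu); the base space X is space mu with sets mu.\<close>
definition random_system ::
    "'m measure \<Rightarrow> 'x measure \<Rightarrow> ('m \<Rightarrow> 'x) \<Rightarrow> ('m \<Rightarrow> 'm) \<Rightarrow> ('x \<Rightarrow> 'm measure) \<Rightarrow> bool" where
  "random_system M \<mu> \<pi> T \<eta> \<longleftrightarrow> measured_fibration M \<mu> \<pi> \<eta> \<and> T \<in> measurable M M \<and> prob_space \<mu>"

definition T_invariant ::
    "'m measure \<Rightarrow> 'x measure \<Rightarrow> ('m \<Rightarrow> 'x) \<Rightarrow> ('m \<Rightarrow> 'm) \<Rightarrow> ('x \<Rightarrow> 'm measure) \<Rightarrow> bool" where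
  "T_invariant M \<mu> \<pi> T \<eta> \<longleftrightarrow> random_system M \<mu> \<pi> T \<eta> \<and> meas_iso M M T \<and>
     distr (comp_kernel \<mu> \<eta>) M T = comp_kernel \<mu> \<eta>"

definition time_reversing ::
    "'m measure \<Rightarrow> 'x measure \<Rightarrow> ('m \<Rightarrow> 'x) \<Rightarrow> ('m \<Rightarrow> 'm) \<Rightarrow> ('x \<Rightarrow> 'm measure) \<Rightarrow> ('m \<Rightarrow> 'm) \<Rightarrow> bool" where
  "time_reversing M \<mu> \<pi> T \<eta> Jt \<longleftrightarrow> meas_iso M M Jt \<and>
     (\<forall>\<xi>\<in>space M. \<forall>\<zeta>\<in>space M. \<pi> \<xi> = \<pi> \<zeta> \<longrightarrow> \<pi> (Jt \<xi>) = \<pi> (Jt \<zeta>)) \<and>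
     distr (comp_kernel \<mu> \<eta>) M Jt = comp_kernel \<mu> \<eta> \<and>
     (\<forall>\<xi>\<in>space M. T (Jt \<xi>) = Jt (the_inv_into (space M) T \<xi>))"

definition induced_map ::
    "'m measure \<Rightarrow> 'x measure \<Rightarrow> ('m \<Rightarrow> 'x) \<Rightarrow> ('m \<Rightarrow> 'm) \<Rightarrow> ('x \<Rightarrow> 'x) \<Rightarrow> bool" where
  "induced_map M \<mu> \<pi> Jt J \<longleftrightarrow> meas_iso \<mu> \<mu> J \<and> distr \<mu> \<mu> J = \<mu> \<and>
     (\<forall>\<xi>\<in>space M. J (\<pi> \<xi>) = \<pi> (Jt \<xi>))"

definition L2 :: "'x measure \<Rightarrow> ('x \<Rightarrow> real) set" where
  "L2 \<mu> = {f. f \<in> borel_measurable \<mu> \<and> integrable \<mu> (\<lambda>x. (f x)\<^sup>2)}"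

definition L2_inner :: "'x measure \<Rightarrow> ('x \<Rightarrow> real) \<Rightarrow> ('x \<Rightarrow> real) \<Rightarrow> real" where
  "L2_inner \<mu> f g = (\<integral>x. f x * g x \<partial>\<mu>)"

end

theory Submission
  imports Defs
begin

lemma bind_nn_real:
  fixes f :: "'m \<Rightarrow> real"
  assumes K: "K \<in> measurable \<mu> (subprob_algebra M)" and ne: "space \<mu> \<noteq> {}"
    and f[measurable]: "f \<in> borel_measurable M" and nn: "\<And>x. 0 \<le> f x"
    and int: "integrable (bind \<mu> K) f"
  shows "AE x in \<mu>. integrable (K x) f"
    and "integrable \<mu> (\<lambda>x. \<integral>\<xi>. f \<xi> \<partial>K x)"
    and "(\<integral>\<xi>. f \<xi> \<partial>bind \<mu> K) = (\<integral>x. (\<integral>\<xi>. f \<xi> \<partial>K x) \<partial>\<mu>)"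
proof -
  have sK: "\<And>x. x \<in> space \<mu> \<Longrightarrow> sets (K x) = sets M"
    using K by (rule subprob_measurableD(2))
  have sb: "sets (bind \<mu> K) = sets M" using sK ne by (rule sets_bind)
  define \<phi> where "\<phi> x = (\<integral>\<^sup>+\<xi>. ennreal (f \<xi>) \<partial>K x)" for x
  have \<phi>m: "\<phi> \<in> borel_measurable \<mu>" unfolding \<phi>_def
    by (rule measurable_compose[OF K nn_integral_measurable_subprob_algebra]) simp
  have eq1: "(\<integral>\<^sup>+\<xi>. ennreal (f \<xi>) \<partial>bind \<mu> K) = (\<integral>\<^sup>+x. \<phi> x \<partial>\<mu>)"
    unfolding \<phi>_def by (rule nn_integral_bind[OF _ K]) simp
  have fin: "(\<integral>\<^sup>+\<xi>. ennreal (f \<xi>) \<partial>bind \<mu> K) < \<infinity>"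
    using integrableD(2)[OF int] nn by (simp add: less_top)
  have ae: "AE x in \<mu>. \<phi> x \<noteq> \<infinity>"
    using nn_integral_PInf_AE[OF \<phi>m] fin eq1 by simp
  have ae2: "AE x in \<mu>. integrable (K x) f \<and> \<phi> x = ennreal (\<integral>\<xi>. f \<xi> \<partial>K x)"
    using ae AE_space
  proof eventually_elim
    case (elim x)
    have fm: "f \<in> borel_measurable (K x)" using sK[OF elim(2)] by (simp cong: measurable_cong_sets)
    have i: "integrable (K x) f"
      by (rule integrableI_bounded[OF fm]) (use elim nn in \<open>simp add: \<phi>_def top.not_eq_extremum\<close>)
    moreover have "\<phi> x = ennreal (\<integral>\<xi>. f \<xi> \<partial>K x)"
      unfolding \<phi>_def by (rule nn_integral_eq_integral[OF i]) (simp add: nn)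
    ultimately show ?case by simp
  qed
  then show "AE x in \<mu>. integrable (K x) f" by auto
  have Am: "(\<lambda>x. \<integral>\<xi>. f \<xi> \<partial>K x) \<in> borel_measurable \<mu>"
    by (rule measurable_compose[OF K integral_measurable_subprob_algebra]) simp
  have eq2: "(\<integral>\<^sup>+x. ennreal (\<integral>\<xi>. f \<xi> \<partial>K x) \<partial>\<mu>) = (\<integral>\<^sup>+x. \<phi> x \<partial>\<mu>)"
    by (rule nn_integral_cong_AE) (use ae2 in auto)
  have Ann: "\<And>x. 0 \<le> (\<integral>\<xi>. f \<xi> \<partial>K x)" by (simp add: nn)
  show "integrable \<mu> (\<lambda>x. \<integral>\<xi>. f \<xi> \<partial>K x)"
    by (rule integrableI_nonneg[OF Am]) (use eq2 eq1 fin Ann in auto)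
  have "(\<integral>\<xi>. f \<xi> \<partial>bind \<mu> K) = enn2real (\<integral>\<^sup>+\<xi>. ennreal (f \<xi>) \<partial>bind \<mu> K)"
    by (rule integral_eq_nn_integral) (auto simp: nn cong: measurable_cong_sets[OF sb])
  also have "\<dots> = enn2real (\<integral>\<^sup>+x. ennreal (\<integral>\<xi>. f \<xi> \<partial>K x) \<partial>\<mu>)" using eq1 eq2 by simp
  also have "\<dots> = (\<integral>x. (\<integral>\<xi>. f \<xi> \<partial>K x) \<partial>\<mu>)"
    by (rule integral_eq_nn_integral[symmetric]) (auto simp: Am Ann)
  finally show "(\<integral>\<xi>. f \<xi> \<partial>bind \<mu> K) = (\<integral>x. (\<integral>\<xi>. f \<xi> \<partial>K x) \<partial>\<mu>)" .
qed

lemma bind_real: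
  fixes f :: "'m \<Rightarrow> real"
  assumes K: "K \<in> measurable \<mu> (subprob_algebra M)" and ne: "space \<mu> \<noteq> {}"
    and f[measurable]: "f \<in> borel_measurable M"
    and int: "integrable (bind \<mu> K) f"
  shows "(\<integral>\<xi>. f \<xi> \<partial>bind \<mu> K) = (\<integral>x. (\<integral>\<xi>. f \<xi> \<partial>K x) \<partial>\<mu>)"
proof -
  have sK: "\<And>x. x \<in> space \<mu> \<Longrightarrow> sets (K x) = sets M"
    using K by (rule subprob_measurableD(2))
  have sb: "sets (bind \<mu> K) = sets M" using sK ne by (rule sets_bind)
  define fp where "fp \<xi> = max (f \<xi>) 0" for \<xi>
  define fn where "fn \<xi> = max (- f \<xi>) 0" for \<xi>
  have fpm[measurable]: "fp \<in> borel_measurable M" unfolding fp_def by measurable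
  have fnm[measurable]: "fn \<in> borel_measurable M" unfolding fn_def by measurable
  have ip: "integrable (bind \<mu> K) fp" unfolding fp_def by (intro integrable_max int) simp
  have in': "integrable (bind \<mu> K) fn" unfolding fn_def by (intro integrable_max integrable_minus int) simp
  have fpnn: "\<And>x. 0 \<le> fp x" and fnnn: "\<And>x. 0 \<le> fn x" by (auto simp: fp_def fn_def)
  note P = bind_nn_real[OF K ne fpm fpnn ip] and N = bind_nn_real[OF K ne fnm fnnn in']
  have fpn: "f \<xi> = fp \<xi> - fn \<xi>" for \<xi> unfolding fp_def fn_def by auto
  have "(\<integral>\<xi>. f \<xi> \<partial>bind \<mu> K) = (\<integral>\<xi>. fp \<xi> \<partial>bind \<mu> K) - (\<integral>\<xi>. fn \<xi> \<partial>bind \<mu> K)"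
    unfolding fpn by (rule Bochner_Integration.integral_diff[OF ip in'])
  also have "\<dots> = (\<integral>x. (\<integral>\<xi>. fp \<xi> \<partial>K x) \<partial>\<mu>) - (\<integral>x. (\<integral>\<xi>. fn \<xi> \<partial>K x) \<partial>\<mu>)"
    using P(3) N(3) by (simp add: fp_def fn_def)
  also have "\<dots> = (\<integral>x. (\<integral>\<xi>. fp \<xi> \<partial>K x) - (\<integral>\<xi>. fn \<xi> \<partial>K x) \<partial>\<mu>)"
    by (rule Bochner_Integration.integral_diff[symmetric]) (use P(2) N(2) in \<open>simp_all add: fp_def fn_def\<close>)
  also have "\<dots> = (\<integral>x. (\<integral>\<xi>. f \<xi> \<partial>K x) \<partial>\<mu>)"
  proof (rule integral_cong_AE)
    show "(\<lambda>x. (\<integral>\<xi>. fp \<xi> \<partial>K x) - (\<integral>\<xi>. fn \<xi> \<partial>K x)) \<in> borel_measurable \<mu>"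
      by (intro borel_measurable_diff measurable_compose[OF K integral_measurable_subprob_algebra]) simp_all
    show "(\<lambda>x. (\<integral>\<xi>. f \<xi> \<partial>K x)) \<in> borel_measurable \<mu>"
      by (intro measurable_compose[OF K integral_measurable_subprob_algebra]) simp_all
    show "AE x in \<mu>. (\<integral>\<xi>. fp \<xi> \<partial>K x) - (\<integral>\<xi>. fn \<xi> \<partial>K x) = (\<integral>\<xi>. f \<xi> \<partial>K x)"
      using P(1) N(1)
    proof eventually_elim
      case (elim x)
      show ?case unfolding fpn[abs_def]
        by (rule Bochner_Integration.integral_diff[symmetric]) (use elim in simp_all)
    qed
  qed
  finally show ?thesis .
qed


lemma L2_prod_int:
  fixes u v :: "'a \<Rightarrow> real"
  assumes "u \<in> borel_measurable N" "v \<in> borel_measurable N"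
    "integrable N (\<lambda>x. (u x)\<^sup>2)" "integrable N (\<lambda>x. (v x)\<^sup>2)"
  shows "integrable N (\<lambda>x. u x * v x)"
proof (rule Bochner_Integration.integrable_bound[OF Bochner_Integration.integrable_add[OF assms(3,4)]])
  show "(\<lambda>x. u x * v x) \<in> borel_measurable N" using assms by simp
  have "\<bar>u x * v x\<bar> \<le> (u x)\<^sup>2 + (v x)\<^sup>2" for x
  proof -
    have "0 \<le> (\<bar>u x\<bar> - \<bar>v x\<bar>)\<^sup>2" by simp
    then show ?thesis unfolding power2_eq_square abs_mult
      by (smt (verit) abs_mult_self_eq abs_ge_zero mult_nonneg_nonneg left_diff_distrib right_diff_distrib)
  qed
  then show "AE x in N. norm (u x * v x) \<le> norm ((u x)\<^sup>2 + (v x)\<^sup>2)" by auto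
qed

theorem proposition2p3:
  fixes M :: "'m measure" and \<mu> :: "'x measure"
    and \<pi> :: "'m \<Rightarrow> 'x" and T Jt :: "'m \<Rightarrow> 'm" and \<eta> :: "'x \<Rightarrow> 'm measure"
    and J :: "'x \<Rightarrow> 'x"
  assumes "T_invariant M \<mu> \<pi> T \<eta>"
    and "time_reversing M \<mu> \<pi> T \<eta> Jt"
    and "induced_map M \<mu> \<pi> Jt J"
  shows "\<forall>f\<in>L2 \<mu>. \<forall>g\<in>L2 \<mu>.
           L2_inner \<mu> (markov_op \<pi> T \<eta> f) g
         = L2_inner \<mu> (f \<circ> J) (markov_op \<pi> T \<eta> (g \<circ> J))"
proof (intro ballI)
  fix f g assume fL: "f \<in> L2 \<mu>" and gL: "g \<in> L2 \<mu>"
  have pmX: "points_measurable \<mu>" and \<pi>m[measurable]: "\<pi> \<in> measurable M \<mu>"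
    and fib: "\<And>x. x \<in> space \<mu> \<Longrightarrow> prob_space (\<eta> x) \<and> sets (\<eta> x) = sets M \<and>
         emeasure (\<eta> x) (\<pi> -` {x} \<inter> space M) = 1"
    and nnm: "\<And>h. h \<in> borel_measurable M \<Longrightarrow> (\<lambda>x. \<integral>\<^sup>+ \<xi>. h \<xi> \<partial>\<eta> x) \<in> borel_measurable \<mu>"
    and Tm[measurable]: "T \<in> measurable M M" and P\<mu>: "prob_space \<mu>"
    and Tiso: "meas_iso M M T"
    using assms(1) unfolding T_invariant_def random_system_def measured_fibration_def by auto
  define \<nu> where "\<nu> = comp_kernel \<mu> \<eta>"
  have \<nu>T: "distr \<nu> M T = \<nu>" using assms(1) unfolding T_invariant_def \<nu>_def by auto
  have Jtm[measurable]: "Jt \<in> measurable M M" and \<nu>J: "distr \<nu> M Jt = \<nu>"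
    and rev: "\<And>\<xi>. \<xi> \<in> space M \<Longrightarrow> T (Jt \<xi>) = Jt (the_inv_into (space M) T \<xi>)"
    using assms(2) unfolding time_reversing_def meas_iso_def \<nu>_def by auto
  have Jm[measurable]: "J \<in> measurable \<mu> \<mu>" and \<mu>J: "distr \<mu> \<mu> J = \<mu>"
    and Jpi: "\<And>\<xi>. \<xi> \<in> space M \<Longrightarrow> J (\<pi> \<xi>) = \<pi> (Jt \<xi>)"
    using assms(3) unfolding induced_map_def meas_iso_def by auto
  define Ti where "Ti = the_inv_into (space M) T"
  have Tim[measurable]: "Ti \<in> measurable M M" and Tbij: "bij_betw T (space M) (space M)"
    using Tiso unfolding meas_iso_def Ti_def by auto
  have TiT: "\<And>\<xi>. \<xi> \<in> space M \<Longrightarrow> Ti (T \<xi>) = \<xi>"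
    unfolding Ti_def using Tbij by (meson bij_betw_imp_inj_on the_inv_into_f_f)
  have Tsp: "\<And>\<xi>. \<xi> \<in> space M \<Longrightarrow> T \<xi> \<in> space M" using Tm by (meson measurable_space)
  have Jtsp: "\<And>\<xi>. \<xi> \<in> space M \<Longrightarrow> Jt \<xi> \<in> space M" using Jtm by (meson measurable_space)
  have ne: "space \<mu> \<noteq> {}" using P\<mu> by (simp add: prob_space.not_empty)
  have K: "\<eta> \<in> measurable \<mu> (subprob_algebra M)"
  proof (rule measurable_subprob_algebra)
    fix a assume a: "a \<in> space \<mu>"
    then show "subprob_space (\<eta> a)" using fib prob_space_imp_subprob_space by blast
    show "sets (\<eta> a) = sets M" using fib a by blast
  next
    fix A assume A: "A \<in> sets M"
    have "(\<lambda>x. \<integral>\<^sup>+ \<xi>. indicator A \<xi> \<partial>\<eta> x) \<in> borel_measurable \<mu>"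
      using A by (intro nnm) simp
    then show "(\<lambda>a. emeasure (\<eta> a) A) \<in> borel_measurable \<mu>"
      by (rule measurable_cong[THEN iffD1, rotated]) (use A fib in \<open>auto simp: nn_integral_indicator\<close>)
  qed
  have s\<nu>[measurable_cong]: "sets \<nu> = sets M" unfolding \<nu>_def comp_kernel_def
    using fib ne by (intro sets_bind) auto
  have sp\<nu>: "space \<nu> = space M" using s\<nu> by (rule sets_eq_imp_space_eq)
  have fm[measurable]: "f \<in> borel_measurable \<mu>" and f2: "integrable \<mu> (\<lambda>x. (f x)\<^sup>2)"
    using fL by (auto simp: L2_def)
  have gm[measurable]: "g \<in> borel_measurable \<mu>" and g2: "integrable \<mu> (\<lambda>x. (g x)\<^sup>2)"
    using gL by (auto simp: L2_def)
  have AEfib: "AE \<xi> in \<eta> x. \<pi> \<xi> = x" if x: "x \<in> space \<mu>" for x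
  proof -
    interpret prob_space "\<eta> x" using fib x by blast
    have sx: "sets (\<eta> x) = sets M" using fib x by blast
    have S: "\<pi> -` {x} \<inter> space M \<in> sets M"
      using pmX x unfolding points_measurable_def by (intro measurable_sets[OF \<pi>m]) auto
    have "AE \<xi> in \<eta> x. \<xi> \<in> \<pi> -` {x} \<inter> space M"
      using S fib[OF x] sx by (intro AE_prob_1) (auto simp: emeasure_eq_measure)
    then show ?thesis by auto
  qed
  have SQ: "integrable \<nu> (\<lambda>\<xi>. (u (\<pi> \<xi>))\<^sup>2)"
    if um[measurable]: "u \<in> borel_measurable \<mu>" and u2: "integrable \<mu> (\<lambda>x. (u x)\<^sup>2)" for u :: "'x \<Rightarrow> real"
  proof (rule integrableI_nonneg)
    show "(\<lambda>\<xi>. (u (\<pi> \<xi>))\<^sup>2) \<in> borel_measurable \<nu>" by measurable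
    show "AE \<xi> in \<nu>. 0 \<le> (u (\<pi> \<xi>))\<^sup>2" by simp
    have "(\<integral>\<^sup>+\<xi>. ennreal ((u (\<pi> \<xi>))\<^sup>2) \<partial>\<nu>) = (\<integral>\<^sup>+x. \<integral>\<^sup>+\<xi>. ennreal ((u (\<pi> \<xi>))\<^sup>2) \<partial>\<eta> x \<partial>\<mu>)"
      unfolding \<nu>_def comp_kernel_def by (rule nn_integral_bind[OF _ K]) measurable
    also have "\<dots> = (\<integral>\<^sup>+x. ennreal ((u x)\<^sup>2) \<partial>\<mu>)"
    proof (rule nn_integral_cong)
      fix x assume x: "x \<in> space \<mu>"
      interpret prob_space "\<eta> x" using fib x by blast
      have "(\<integral>\<^sup>+\<xi>. ennreal ((u (\<pi> \<xi>))\<^sup>2) \<partial>\<eta> x) = (\<integral>\<^sup>+\<xi>. ennreal ((u x)\<^sup>2) \<partial>\<eta> x)"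
        by (rule nn_integral_cong_AE) (use AEfib[OF x] in auto)
      also have "\<dots> = ennreal ((u x)\<^sup>2)" by (simp add: emeasure_space_1)
      finally show "(\<integral>\<^sup>+\<xi>. ennreal ((u (\<pi> \<xi>))\<^sup>2) \<partial>\<eta> x) = ennreal ((u x)\<^sup>2)" .
    qed
    also have "\<dots> < \<infinity>" using integrableD(2)[OF u2] by (simp add: less_top)
    finally show "(\<integral>\<^sup>+\<xi>. ennreal ((u (\<pi> \<xi>))\<^sup>2) \<partial>\<nu>) < \<infinity>" .
  qed
  have SQT: "integrable \<nu> (\<lambda>\<xi>. (u (\<pi> (T \<xi>)))\<^sup>2)"
    if um[measurable]: "u \<in> borel_measurable \<mu>" and u2: "integrable \<mu> (\<lambda>x. (u x)\<^sup>2)" for u :: "'x \<Rightarrow> real"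
  proof -
    have "integrable (distr \<nu> M T) (\<lambda>\<xi>. (u (\<pi> \<xi>))\<^sup>2)" using SQ[OF um u2] \<nu>T by simp
    then show ?thesis by (subst (asm) integrable_distr_eq) measurable
  qed
  have JL: "integrable \<mu> (\<lambda>x. (u (J x))\<^sup>2)"
    if um[measurable]: "u \<in> borel_measurable \<mu>" and u2: "integrable \<mu> (\<lambda>x. (u x)\<^sup>2)" for u :: "'x \<Rightarrow> real"
  proof -
    have "integrable (distr \<mu> \<mu> J) (\<lambda>x. (u x)\<^sup>2)" using u2 \<mu>J by simp
    then show ?thesis by (subst (asm) integrable_distr_eq) measurable
  qed
  have D: "(\<integral>x. h x * (\<integral>\<xi>. k \<xi> \<partial>\<eta> x) \<partial>\<mu>) = (\<integral>\<xi>. h (\<pi> \<xi>) * k \<xi> \<partial>\<nu>)"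
    if hm[measurable]: "h \<in> borel_measurable \<mu>" and km[measurable]: "k \<in> borel_measurable M"
      and hk: "integrable \<nu> (\<lambda>\<xi>. h (\<pi> \<xi>) * k \<xi>)" for h :: "'x \<Rightarrow> real" and k
  proof -
    have "(\<integral>\<xi>. h (\<pi> \<xi>) * k \<xi> \<partial>\<nu>) = (\<integral>x. (\<integral>\<xi>. h (\<pi> \<xi>) * k \<xi> \<partial>\<eta> x) \<partial>\<mu>)"
      using hk unfolding \<nu>_def comp_kernel_def by (intro bind_real[OF K ne]) measurable
    also have "\<dots> = (\<integral>x. h x * (\<integral>\<xi>. k \<xi> \<partial>\<eta> x) \<partial>\<mu>)"
    proof (rule Bochner_Integration.integral_cong[OF refl])
      fix x assume x: "x \<in> space \<mu>"
      have sx[measurable_cong]: "sets (\<eta> x) = sets M" using fib x by blast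
      have "(\<integral>\<xi>. h (\<pi> \<xi>) * k \<xi> \<partial>\<eta> x) = (\<integral>\<xi>. h x * k \<xi> \<partial>\<eta> x)"
        by (rule integral_cong_AE) (use AEfib[OF x] in \<open>auto\<close>)
      then show "(\<integral>\<xi>. h (\<pi> \<xi>) * k \<xi> \<partial>\<eta> x) = h x * (\<integral>\<xi>. k \<xi> \<partial>\<eta> x)" by simp
    qed
    finally show ?thesis ..
  qed
  have "L2_inner \<mu> (markov_op \<pi> T \<eta> f) g = (\<integral>x. g x * (\<integral>\<xi>. f (\<pi> (T \<xi>)) \<partial>\<eta> x) \<partial>\<mu>)"
    unfolding L2_inner_def markov_op_def by (simp add: mult.commute)
  also have "\<dots> = (\<integral>\<xi>. g (\<pi> \<xi>) * f (\<pi> (T \<xi>)) \<partial>\<nu>)"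
    by (rule D) (measurable, intro L2_prod_int SQ SQT, measurable, rule g2, measurable, rule f2)
  finally have LHS: "L2_inner \<mu> (markov_op \<pi> T \<eta> f) g = (\<integral>\<xi>. f (\<pi> (T \<xi>)) * g (\<pi> \<xi>) \<partial>\<nu>)"
    by (simp add: mult.commute)
  have "L2_inner \<mu> (f \<circ> J) (markov_op \<pi> T \<eta> (g \<circ> J))
      = (\<integral>x. f (J x) * (\<integral>\<xi>. g (J (\<pi> (T \<xi>))) \<partial>\<eta> x) \<partial>\<mu>)"
    unfolding L2_inner_def markov_op_def by simp
  also have "\<dots> = (\<integral>\<xi>. f (J (\<pi> \<xi>)) * g (J (\<pi> (T \<xi>))) \<partial>\<nu>)"
    by (rule D[where h="\<lambda>x. f (J x)"]) (measurable, intro L2_prod_int SQ[where u="\<lambda>x. f (J x)"]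
        SQT[where u="\<lambda>x. g (J x)"] JL, measurable, rule f2, measurable, rule g2)
  also have "\<dots> = (\<integral>\<xi>. f (\<pi> (Jt \<xi>)) * g (\<pi> (Ti (Jt \<xi>))) \<partial>\<nu>)"
  proof (rule Bochner_Integration.integral_cong[OF refl])
    fix \<xi> assume "\<xi> \<in> space \<nu>"
    then have \<xi>: "\<xi> \<in> space M" using sp\<nu> by simp
    have "T (Jt (T \<xi>)) = Jt \<xi>" using rev[OF Tsp[OF \<xi>]] TiT[OF \<xi>] unfolding Ti_def by simp
    then have "Ti (Jt \<xi>) = Jt (T \<xi>)" using TiT[OF Jtsp[OF Tsp[OF \<xi>]]] by metis
    then show "f (J (\<pi> \<xi>)) * g (J (\<pi> (T \<xi>))) = f (\<pi> (Jt \<xi>)) * g (\<pi> (Ti (Jt \<xi>)))"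
      using Jpi[OF \<xi>] Jpi[OF Tsp[OF \<xi>]] by simp
  qed
  also have "\<dots> = (\<integral>\<zeta>. f (\<pi> \<zeta>) * g (\<pi> (Ti \<zeta>)) \<partial>distr \<nu> M Jt)"
    by (rule integral_distr[symmetric]) measurable
  also have "\<dots> = (\<integral>\<zeta>. f (\<pi> \<zeta>) * g (\<pi> (Ti \<zeta>)) \<partial>distr \<nu> M T)" using \<nu>J \<nu>T by simp
  also have "\<dots> = (\<integral>\<xi>. f (\<pi> (T \<xi>)) * g (\<pi> (Ti (T \<xi>))) \<partial>\<nu>)"
    by (rule integral_distr) measurable
  also have "\<dots> = (\<integral>\<xi>. f (\<pi> (T \<xi>)) * g (\<pi> \<xi>) \<partial>\<nu>)"
    by (rule Bochner_Integration.integral_cong[OF refl]) (simp add: TiT sp\<nu>)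
  finally show "L2_inner \<mu> (markov_op \<pi> T \<eta> f) g = L2_inner \<mu> (f \<circ> J) (markov_op \<pi> T \<eta> (g \<circ> J))"
    using LHS by simp
qed

end
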